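(* Let $n\ge3$, let $\overrightarrow{C_n}$ be an oriented cycle and $D$ a distance set of $\overrightarrow{C_n}$ with $\min(D)\ge2$. If $\overrightarrow{C_n}$ is $D$-antimagic, then $\overrightarrow{C_n}$ is unidirectional.
   Context: An oriented graph is a simple graph each of whose edges is given one direction (an arc $(u,v)$ goes from $u$ to $v$). For vertices $u,v$, $d(u,v)$ is the length of a shortest directed path from $u$ to $v$ ($d(u,u)=0$, $\infty$ if no path). A distance set of an oriented graph is a nonempty set $D$ of nonnegative integers each of which is a finite distance $d(u,v)$ for some pair of vertices. $N_D(v)=\{y : d(v,y)\in D\}$; for a bijection $f:V\to\{1,\dots,|V|\}$, $\omega_D(v)=\sum_{x\in N_D(v)}f(x)$ (empty sum $0$); $f$ is $D$-antimagic if distinct vertices have distinct $D$-weights, and the graph is $D$-antimagic if such an $f$ exists. An oriented cycle $\overrightarrow{C_n}$ is an orientation of the cycle on $v_1,\dots,v_n$. It is unidirectional if (up to relabeling) its arcs are $(v_i,v_{i+1})$, $1\le i\le n-1$, and $(v_n,v_1)$. *)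

theory Defs
  imports Main
begin

text \<open>An oriented cycle on n vertices is modelled on the vertices 0..n-1 (v_1..v_n of the
 paper), with underlying cycle edges {i, (i+1) mod n}; the boolean orient i says whether
 the edge {i,(i+1) mod n} is oriented forwards (arc (i,(i+1) mod n)) or backwards.\<close>

definition cycle_arcs :: "nat \<Rightarrow> (nat \<Rightarrow> bool) \<Rightarrow> (nat \<times> nat) set" where
  "cycle_arcs n orient =
     {(i, Suc i mod n) | i. i < n \<and> orient i} \<union> {(Suc i mod n, i) | i. i < n \<and> \<not> orient i}"

definition dist_is :: "('a \<times> 'a) set \<Rightarrow> 'a \<Rightarrow> 'a \<Rightarrow> nat \<Rightarrow> bool" where
  "dist_is A u v k \<longleftrightarrow> (u, v) \<in> A ^^ k \<and> (\<forall>j<k. (u, v) \<notin> A ^^ j)"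

definition distance_set :: "'a set \<Rightarrow> ('a \<times> 'a) set \<Rightarrow> nat set \<Rightarrow> bool" where
  "distance_set V A D \<longleftrightarrow> D \<noteq> {} \<and> (\<forall>k\<in>D. \<exists>u\<in>V. \<exists>v\<in>V. dist_is A u v k)"

definition D_neighbourhood :: "'a set \<Rightarrow> ('a \<times> 'a) set \<Rightarrow> nat set \<Rightarrow> 'a \<Rightarrow> 'a set" where
  "D_neighbourhood V A D v = {y \<in> V. \<exists>k\<in>D. dist_is A v y k}"

definition D_weight :: "'a set \<Rightarrow> ('a \<times> 'a) set \<Rightarrow> nat set \<Rightarrow> ('a \<Rightarrow> nat) \<Rightarrow> 'a \<Rightarrow> nat" where
  "D_weight V A D f v = (\<Sum>x\<in>D_neighbourhood V A D v. f x)"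

definition D_antimagic_labeling :: "'a set \<Rightarrow> ('a \<times> 'a) set \<Rightarrow> nat set \<Rightarrow> ('a \<Rightarrow> nat) \<Rightarrow> bool" where
  "D_antimagic_labeling V A D f \<longleftrightarrow>
     bij_betw f V {1..card V} \<and> inj_on (D_weight V A D f) V"

definition D_antimagic :: "'a set \<Rightarrow> ('a \<times> 'a) set \<Rightarrow> nat set \<Rightarrow> bool" where
  "D_antimagic V A D \<longleftrightarrow> (\<exists>f. D_antimagic_labeling V A D f)"

definition unidirectional :: "nat \<Rightarrow> 'a set \<Rightarrow> ('a \<times> 'a) set \<Rightarrow> bool" where
  "unidirectional n V A \<longleftrightarrow>
     (\<exists>w. bij_betw w {0..<n} V \<and> A = {(w i, w (Suc i mod n)) | i. i < n})"

end

theory Submission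
  imports Defs
begin

lemma arc_cases:
  assumes "n \<ge> 1" "(x mod n, b) \<in> cycle_arcs n orient"
  shows "(orient (x mod n) \<and> b = Suc x mod n) \<or>
         (\<not> orient ((x + (n - 1)) mod n) \<and> b = (x + (n - 1)) mod n)"
proof -
  from assms(2) consider
    i where "i < n" "orient i" "x mod n = i" "b = Suc i mod n"
  | i where "i < n" "\<not> orient i" "x mod n = Suc i mod n" "b = i"
    unfolding cycle_arcs_def by blast
  then show ?thesis
  proof cases
    case 1
    then have "b = Suc x mod n" by (metis mod_Suc_eq)
    then show ?thesis using 1 by simp
  next
    case 2
    have "i = (i + n) mod n" using 2 by simp
    also have "i + n = Suc i + (n - 1)" using assms(1) by simp
    also have "(Suc i + (n - 1)) mod n = (Suc i mod n + (n - 1)) mod n" by (simp add: mod_add_left_eq)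
    also have "\<dots> = (x mod n + (n - 1)) mod n" using 2 by simp
    also have "\<dots> = (x + (n - 1)) mod n" by (simp add: mod_add_left_eq)
    finally have "i = (x + (n - 1)) mod n" .
    then show ?thesis using 2 by simp
  qed
qed

lemma dead_no_walk2:
  assumes n: "n \<ge> 1"
    and d1: "\<not> (orient (x mod n) \<and> orient (Suc x mod n))"
    and d2: "\<not> (\<not> orient ((x + (n - 1)) mod n) \<and> \<not> orient ((x + (n - 1) + (n - 1)) mod n))"
  shows "(x mod n, y) \<notin> cycle_arcs n orient ^^ 2"
proof
  assume "(x mod n, y) \<in> cycle_arcs n orient ^^ 2"
  then obtain z where z1: "(x mod n, z) \<in> cycle_arcs n orient" and z2: "(z, y) \<in> cycle_arcs n orient"
    by (auto simp: numeral_2_eq_2)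
  from arc_cases[OF n z1] show False
  proof
    assume a: "orient (x mod n) \<and> z = Suc x mod n"
    with z2 have "(Suc x mod n, y) \<in> cycle_arcs n orient" by simp
    from arc_cases[OF n this] have "orient (Suc x mod n) \<or> \<not> orient ((Suc x + (n - 1)) mod n)" by blast
    moreover have "Suc x + (n - 1) = x + n" using n by simp
    ultimately show False using a d1 by auto
  next
    assume a: "\<not> orient ((x + (n - 1)) mod n) \<and> z = (x + (n - 1)) mod n"
    with z2 have "((x + (n - 1)) mod n, y) \<in> cycle_arcs n orient" by simp
    from arc_cases[OF n this] show False using a d2 by blast
  qed
qed

lemma dead_no_walk:
  assumes n: "n \<ge> 1"
    and d1: "\<not> (orient (x mod n) \<and> orient (Suc x mod n))"
    and d2: "\<not> (\<not> orient ((x + (n - 1)) mod n) \<and> \<not> orient ((x + (n - 1) + (n - 1)) mod n))"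
    and k: "k \<ge> 2"
  shows "(x mod n, y) \<notin> cycle_arcs n orient ^^ k"
proof
  assume "(x mod n, y) \<in> cycle_arcs n orient ^^ k"
  moreover have "cycle_arcs n orient ^^ k = cycle_arcs n orient ^^ 2 O cycle_arcs n orient ^^ (k - 2)"
    using k by (metis le_add_diff_inverse relpow_add)
  ultimately obtain z where "(x mod n, z) \<in> cycle_arcs n orient ^^ 2" by blast
  with dead_no_walk2[OF n d1 d2] show False by blast
qed

lemma transition:
  assumes "P a" "\<not> P c" "a \<le> c"
  shows "\<exists>j. a \<le> j \<and> j < c \<and> P j \<and> \<not> P (Suc j)"
  using assms
proof (induction c)
  case 0
  then show ?case by simp
next
  case (Suc c)
  show ?case
  proof (cases "P c")
    case True
    then show ?thesis using Suc by (metis le_Suc_eq lessI)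
  next
    case False
    then have "a \<le> c" using Suc by (metis le_Suc_eq)
    from Suc.IH[OF Suc.prems(1) False this] show ?thesis by (metis less_Suc_eq)
  qed
qed

lemma mod_distinct:
  fixes x y n :: nat
  assumes "x < y" "y < x + n"
  shows "x mod n \<noteq> y mod n"
proof
  assume "x mod n = y mod n"
  then have "n dvd (y - x)" using assms mod_eq_dvd_iff_nat[of x y n] by simp
  moreover have "0 < y - x" "y - x < n" using assms by auto
  ultimately show False using nat_dvd_not_less by blast
qed

definition deadQ :: "nat \<Rightarrow> (nat \<Rightarrow> bool) \<Rightarrow> nat \<Rightarrow> bool" where
  "deadQ n orient x \<longleftrightarrow> \<not> (orient (x mod n) \<and> orient (Suc x mod n)) \<and>
     \<not> (\<not> orient ((x + (n - 1)) mod n) \<and> \<not> orient ((x + (n - 1) + (n - 1)) mod n))"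

lemma comb:
  assumes n: "n \<ge> 3" and a: "orient (a mod n)" and b: "\<not> orient (b mod n)"
  shows "\<exists>x y. deadQ n orient x \<and> deadQ n orient y \<and> x mod n \<noteq> y mod n"
proof -
  define Q where "Q i = orient (i mod n)" for i
  have per: "Q (i + n) = Q i" for i by (simp add: Q_def)
  have nm: "n - 1 + 1 = n" "n - 1 + (n - 1) = n + (n - 2)" using n by auto
  have dq: "deadQ n orient x \<longleftrightarrow> \<not> (Q x \<and> Q (Suc x)) \<and> \<not> (\<not> Q (x + (n - 1)) \<and> \<not> Q (x + (n - 1) + (n - 1)))" for x
    by (simp add: deadQ_def Q_def)
  have "Q (b + a * n) = Q b" by (simp add: Q_def)
  hence qb: "\<not> Q (b + a * n)" using b by (simp add: Q_def)
  have "a \<le> b + a * n" proof -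
    have "a * 1 \<le> a * n" using n by (intro mult_le_mono2) simp
    then show ?thesis by linarith
  qed
  then obtain i where i: "Q i" "\<not> Q (Suc i)"
    using transition[of Q a "b + a * n"] a qb by (auto simp: Q_def)
  have sink: "deadQ n orient (Suc j)" if "Q j" "\<not> Q (Suc j)" for j
  proof -
    have "Suc j + (n - 1) = j + n" using n by simp
    then show ?thesis using that per by (simp add: dq)
  qed
  have d1: "Suc i mod n \<noteq> i mod n" using mod_distinct[of i "Suc i" n] n by auto
  show ?thesis
  proof (cases "Q (i + (n - 1))")
    case True
    have "deadQ n orient i" using True i by (simp add: dq)
    then show ?thesis using sink[OF i] d1 by blast
  next
    case F1: False
    show ?thesis
    proof (cases "Q (Suc (Suc i))")
      case False
      have e1: "Suc (Suc i) + (n - 1) = Suc i + n" using n by simp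
      have e2: "Suc (Suc i) + (n - 1) + (n - 1) = i + n + n" using n by simp
      have "deadQ n orient (Suc (Suc i))" using False i per e1 e2 by (simp add: dq)
      moreover have "Suc (Suc i) mod n \<noteq> Suc i mod n" using mod_distinct[of "Suc i" "Suc (Suc i)" n] n by auto
      ultimately show ?thesis using sink[OF i] by blast
    next
      case True
      have "Suc (Suc i) \<le> i + (n - 1)" using n by simp
      then obtain j where j: "Suc (Suc i) \<le> j" "j < i + (n - 1)" "Q j" "\<not> Q (Suc j)"
        using transition[of Q "Suc (Suc i)" "i + (n - 1)"] True F1 by blast
      have "Suc i mod n \<noteq> Suc j mod n" using mod_distinct[of "Suc i" "Suc j" n] j n by auto
      then show ?thesis using sink[OF i] sink[OF j(3,4)] by blast
    qed
  qed
qed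

theorem mainTheorem6:
  fixes n :: nat and orient :: "nat \<Rightarrow> bool" and D :: "nat set"
  assumes "n \<ge> 3"
    and "distance_set {0..<n} (cycle_arcs n orient) D"
    and "\<forall>k\<in>D. k \<ge> 2"
    and "D_antimagic {0..<n} (cycle_arcs n orient) D"
  shows "unidirectional n {0..<n} (cycle_arcs n orient)"
proof -
  have n1: "n \<ge> 1" using assms(1) by simp
  from assms(4) obtain f where inj: "inj_on (D_weight {0..<n} (cycle_arcs n orient) D f) {0..<n}"
    unfolding D_antimagic_def D_antimagic_labeling_def by blast
  have zero: "D_weight {0..<n} (cycle_arcs n orient) D f (x mod n) = 0" if "deadQ n orient x" for x
  proof -
    have "D_neighbourhood {0..<n} (cycle_arcs n orient) D (x mod n) = {}"
    proof -
      have "\<not> dist_is (cycle_arcs n orient) (x mod n) y k" if "k \<in> D" for y k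
      proof -
        have "k \<ge> 2" using assms(3) that by blast
        have "(x mod n, y) \<notin> cycle_arcs n orient ^^ k"
          using dead_no_walk[OF n1 _ _ \<open>k \<ge> 2\<close>] \<open>deadQ n orient x\<close> unfolding deadQ_def by blast
        then show ?thesis unfolding dist_is_def by blast
      qed
      then show ?thesis unfolding D_neighbourhood_def by blast
    qed
    then show ?thesis by (simp add: D_weight_def)
  qed
  have const: "(\<forall>i<n. orient i) \<or> (\<forall>i<n. \<not> orient i)"
  proof (rule ccontr)
    assume "\<not> ?thesis"
    then obtain a b where "a < n" "orient a" "b < n" "\<not> orient b" by blast
    then have "orient (a mod n)" "\<not> orient (b mod n)" by auto
    from comb[OF assms(1) this] obtain x y where
      xy: "deadQ n orient x" "deadQ n orient y" "x mod n \<noteq> y mod n" by blast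
    have "x mod n \<in> {0..<n}" "y mod n \<in> {0..<n}" using n1 by auto
    with inj zero[OF xy(1)] zero[OF xy(2)] xy(3) show False
      by (metis inj_on_def)
  qed
  then show ?thesis
  proof
    assume all: "\<forall>i<n. orient i"
    have "cycle_arcs n orient = {(id i, id (Suc i mod n)) | i. i < n}"
      unfolding cycle_arcs_def id_def using all by blast
    then show ?thesis unfolding unidirectional_def using bij_betw_id by blast
  next
    assume none: "\<forall>i<n. \<not> orient i"
    define w where "w i = n - 1 - i" for i
    have bij: "bij_betw w {0..<n} {0..<n}"
    proof (rule bij_betw_imageI)
      show "inj_on w {0..<n}" unfolding inj_on_def w_def by auto
      show "w ` {0..<n} = {0..<n}"
      proof
        show "w ` {0..<n} \<subseteq> {0..<n}" unfolding w_def by auto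
        show "{0..<n} \<subseteq> w ` {0..<n}"
        proof
          fix j assume "j \<in> {0..<n}"
          then have "j = w (n - 1 - j)" "n - 1 - j \<in> {0..<n}" unfolding w_def by auto
          then show "j \<in> w ` {0..<n}" by blast
        qed
      qed
    qed
    have "cycle_arcs n orient = {(Suc i mod n, i) | i. i < n}"
      unfolding cycle_arcs_def using none by blast
    also have "\<dots> = {(w i, w (Suc i mod n)) | i. i < n}"
    proof
      show "{(Suc i mod n, i) | i. i < n} \<subseteq> {(w i, w (Suc i mod n)) | i. i < n}"
      proof
        fix p assume "p \<in> {(Suc i mod n, i) | i. i < n}"
        then obtain i where i: "i < n" "p = (Suc i mod n, i)" by blast
        show "p \<in> {(w i, w (Suc i mod n)) | i. i < n}"
        proof (cases "Suc i = n")
          case True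
          have a1: "Suc (n - 1) mod n = 0" "i = n - 1" "Suc i mod n = 0" using True by auto
          have "w (n - 1) = 0" "w 0 = n - 1" unfolding w_def by auto
          then have "p = (w (n - 1), w (Suc (n - 1) mod n))" using i(2) a1 by simp
          moreover have "n - 1 < n" using i by simp
          ultimately show ?thesis by blast
        next
          case False
          then have "Suc i < n" using i by simp
          have a1: "Suc i mod n = Suc i" "Suc (n - 2 - i) mod n = Suc (n - 2 - i)" using \<open>Suc i < n\<close> by auto
          have "w (n - 2 - i) = Suc i" "w (Suc (n - 2 - i)) = i" unfolding w_def using \<open>Suc i < n\<close> by auto
          then have "p = (w (n - 2 - i), w (Suc (n - 2 - i) mod n))" using i(2) a1 by simp
          moreover have "n - 2 - i < n" using i by simp
          ultimately show ?thesis by blast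
        qed
      qed
      show "{(w i, w (Suc i mod n)) | i. i < n} \<subseteq> {(Suc i mod n, i) | i. i < n}"
      proof
        fix p assume "p \<in> {(w i, w (Suc i mod n)) | i. i < n}"
        then obtain i where i: "i < n" "p = (w i, w (Suc i mod n))" by blast
        show "p \<in> {(Suc i mod n, i) | i. i < n}"
        proof (cases "Suc i = n")
          case True
          have a1: "Suc (n - 1) mod n = 0" "i = n - 1" "Suc i mod n = 0" using True by auto
          have "w (n - 1) = 0" "w 0 = n - 1" unfolding w_def by auto
          then have "p = (Suc (n - 1) mod n, n - 1)" using i(2) a1 by simp
          moreover have "n - 1 < n" using i by simp
          ultimately show ?thesis by blast
        next
          case False
          then have "Suc i < n" using i by simp
          have a1: "Suc i mod n = Suc i" "Suc (n - 2 - i) mod n = Suc (n - 2 - i)" using \<open>Suc i < n\<close> by auto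
          have "w i = Suc (n - 2 - i)" "w (Suc i) = n - 2 - i" unfolding w_def using \<open>Suc i < n\<close> by auto
          then have "p = (Suc (n - 2 - i) mod n, n - 2 - i)" using i(2) a1 by simp
          moreover have "n - 2 - i < n" using i by simp
          ultimately show ?thesis by blast
        qed
      qed
    qed
    finally show ?thesis unfolding unidirectional_def using bij by blast
  qed
qed

end
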